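(* Let $A$ be an $n\times n$ generalized tournament matrix. If there exists $\alpha>1/2$ such that for every clan $I$ of $A$ with $|I|\geq 2$ the principal submatrix $A[I]$ is $\alpha$-separable, then $A$ is $\alpha$-linear.
   Context: A generalized tournament matrix of order $n$ is a real $n\times n$ matrix $M=(m_{ij})$ with nonnegative entries satisfying $M+M^{t}=J_n-I_n$. Write $[n]=\{1,\ldots,n\}$. A clan of $M$ is a subset $X\subseteq[n]$ such that for all $i,j\in X$ and $k\in[n]\setminus X$, $m_{ik}=m_{jk}$ and $m_{ki}=m_{kj}$. For $\alpha>1/2$, a matrix $M$ indexed by a set $V$ (such as a principal submatrix $A[I]$ indexed by $I$) is $\alpha$-separable if $V$ can be partitioned into two nonempty sets $X,Y$ with $m_{xy}=\alpha$ for all $x\in X,y\in Y$; $M$ is $\alpha$-linear if there is an ordering $x_1,\ldots,x_n$ of $[n]$ with $m_{x_ix_j}=\alpha$ whenever $i<j$. *)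

theory Defs
  imports Complex_Main
begin

(* An n x n real matrix is modelled as M :: nat => nat => real, with entries
   M i j for i, j in [n] = {1..n}; values outside [n] are irrelevant. *)

definition gen_tournament :: "nat \<Rightarrow> (nat \<Rightarrow> nat \<Rightarrow> real) \<Rightarrow> bool" where
  "gen_tournament n M \<longleftrightarrow>
     (\<forall>i\<in>{1..n}. \<forall>j\<in>{1..n}. M i j \<ge> 0) \<and>
     (\<forall>i\<in>{1..n}. \<forall>j\<in>{1..n}. M i j + M j i = (if i = j then 0 else 1))"

definition is_clan :: "nat \<Rightarrow> (nat \<Rightarrow> nat \<Rightarrow> real) \<Rightarrow> nat set \<Rightarrow> bool" where
  "is_clan n M X \<longleftrightarrow> X \<subseteq> {1..n} \<and>
     (\<forall>i\<in>X. \<forall>j\<in>X. \<forall>k\<in>{1..n} - X. M i k = M j k \<and> M k i = M k j)"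

definition separable_on :: "real \<Rightarrow> (nat \<Rightarrow> nat \<Rightarrow> real) \<Rightarrow> nat set \<Rightarrow> bool" where
  "separable_on \<alpha> M V \<longleftrightarrow>
     (\<exists>X Y. X \<noteq> {} \<and> Y \<noteq> {} \<and> X \<inter> Y = {} \<and> X \<union> Y = V \<and>
            (\<forall>x\<in>X. \<forall>y\<in>Y. M x y = \<alpha>))"

definition linear_mat :: "nat \<Rightarrow> real \<Rightarrow> (nat \<Rightarrow> nat \<Rightarrow> real) \<Rightarrow> bool" where
  "linear_mat n \<alpha> M \<longleftrightarrow>
     (\<exists>x. bij_betw x {1..n} {1..n} \<and>
          (\<forall>i\<in>{1..n}. \<forall>j\<in>{1..n}. i < j \<longrightarrow> M (x i) (x j) = \<alpha>))"

end

theory Submission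
  imports Defs
begin

lemma clan_main:
  assumes gt: "gen_tournament n A"
    and sep: "\<forall>I. is_clan n A I \<and> card I \<ge> 2 \<longrightarrow> separable_on \<alpha> A I"
  shows "is_clan n A V \<Longrightarrow> \<exists>xs. distinct xs \<and> set xs = V \<and> sorted_wrt (\<lambda>a b. A a b = \<alpha>) xs"
proof (induction "card V" arbitrary: V rule: less_induct)
  case less
  have Vsub: "V \<subseteq> {1..n}" using less.prems unfolding is_clan_def by blast
  have finV: "finite V" using Vsub finite_subset by blast
  show ?case
  proof (cases "card V \<ge> 2")
    case False
    then have "card V = 0 \<or> card V = 1" by linarith
    then show ?thesis
    proof
      assume "card V = 0"
      then have "V = {}" using finV by simp
      then show ?thesis by (intro exI[of _ "[]"]) simp
    next
      assume "card V = 1"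
      then obtain v where "V = {v}" using card_1_singletonE by blast
      then show ?thesis by (intro exI[of _ "[v]"]) simp
    qed
  next
    case True
    then have "separable_on \<alpha> A V" using sep less.prems by blast
    then obtain X Y where XY: "X \<noteq> {}" "Y \<noteq> {}" "X \<inter> Y = {}" "X \<union> Y = V"
      and al: "\<forall>x\<in>X. \<forall>y\<in>Y. A x y = \<alpha>" unfolding separable_on_def by blast
    have rev: "A y x = 1 - \<alpha>" if "x \<in> X" "y \<in> Y" for x y
    proof -
      have "x \<noteq> y" using that XY(3) by blast
      moreover have "x \<in> {1..n}" "y \<in> {1..n}" using that XY(4) Vsub by auto
      ultimately have "A x y + A y x = 1" using gt unfolding gen_tournament_def by auto
      then show ?thesis using al that by auto
    qed
    have clV: "\<And>i j k. i \<in> V \<Longrightarrow> j \<in> V \<Longrightarrow> k \<in> {1..n} - V \<Longrightarrow> A i k = A j k \<and> A k i = A k j"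
      using less.prems unfolding is_clan_def by blast
    have cX: "is_clan n A X"
      unfolding is_clan_def
    proof (intro conjI[of "_ \<subseteq> _"] ballI)
      show "X \<subseteq> {1..n}" using XY(4) Vsub by blast
    next
      fix i j k assume i: "i \<in> X" and j: "j \<in> X" and k: "k \<in> {1..n} - X"
      show "A i k = A j k \<and> A k i = A k j"
      proof (cases "k \<in> Y")
        case True then show ?thesis using i j al rev by auto
      next
        case False then have "k \<in> {1..n} - V" using k XY(4) by blast
        then show ?thesis using clV i j XY(4) by blast
      qed
    qed
    have cY: "is_clan n A Y"
      unfolding is_clan_def
    proof (intro conjI[of "_ \<subseteq> _"] ballI)
      show "Y \<subseteq> {1..n}" using XY(4) Vsub by blast
    next
      fix i j k assume i: "i \<in> Y" and j: "j \<in> Y" and k: "k \<in> {1..n} - Y"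
      show "A i k = A j k \<and> A k i = A k j"
      proof (cases "k \<in> X")
        case True then show ?thesis using i j al rev by auto
      next
        case False then have "k \<in> {1..n} - V" using k XY(4) by blast
        then show ?thesis using clV i j XY(4) by blast
      qed
    qed
    have "card X < card V"
    proof (rule psubset_card_mono[OF finV])
      show "X \<subset> V" using XY by blast
    qed
    then obtain xs where xs: "distinct xs" "set xs = X" "sorted_wrt (\<lambda>a b. A a b = \<alpha>) xs"
      using less.hyps cX by blast
    have "card Y < card V"
    proof (rule psubset_card_mono[OF finV])
      show "Y \<subset> V" using XY by blast
    qed
    then obtain ys where ys: "distinct ys" "set ys = Y" "sorted_wrt (\<lambda>a b. A a b = \<alpha>) ys"
      using less.hyps cY by blast
    show ?thesis
      apply (intro exI[of _ "xs @ ys"])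
      using xs ys XY al by (auto simp: sorted_wrt_append)
  qed
qed

theorem lemma5p7:
  fixes n :: nat and A :: "nat \<Rightarrow> nat \<Rightarrow> real" and \<alpha> :: real
  assumes "gen_tournament n A"
    and "\<alpha> > 1/2"
    and "\<forall>I. is_clan n A I \<and> card I \<ge> 2 \<longrightarrow> separable_on \<alpha> A I"
  shows "linear_mat n \<alpha> A"
proof -
  have "is_clan n A {1..n}" unfolding is_clan_def by auto
  then obtain xs where xs: "distinct xs" "set xs = {1..n}" "sorted_wrt (\<lambda>a b. A a b = \<alpha>) xs"
    using clan_main[OF assms(1) assms(3)] by blast
  have len: "length xs = n" using xs distinct_card by fastforce
  have b1: "bij_betw (\<lambda>i. i - 1) {1..n} {..<n}"
    by (rule bij_betw_byWitness[where f' = "\<lambda>i. i + 1"]) auto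
  have b2: "bij_betw ((!) xs) {..<n} {1..n}"
    using bij_betw_nth[OF xs(1)] len xs(2) by auto
  have "bij_betw ((!) xs \<circ> (\<lambda>i. i - 1)) {1..n} {1..n}"
    using bij_betw_trans[OF b1 b2] .
  moreover have "\<forall>i\<in>{1..n}. \<forall>j\<in>{1..n}. i < j \<longrightarrow> A (xs ! (i - 1)) (xs ! (j - 1)) = \<alpha>"
    using xs(3) len by (auto simp: sorted_wrt_iff_nth_less)
  ultimately show ?thesis unfolding linear_mat_def by (intro exI[of _ "(!) xs \<circ> (\<lambda>i. i - 1)"]) auto
qed

end
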